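(* Let $N=2$, $\alpha>1$, and $H_\alpha=\frac{1}{\alpha}\begin{pmatrix}1&\alpha-1\\1&\alpha-1\end{pmatrix}$. Then $$\tau_t(H_\alpha)\longrightarrow\frac{\alpha^2}{2+2(\alpha-1)^2}\qquad\text{as }t\to\infty.$$
   Context: Let $X$ be a square-integrable real random variable with $\mathbb E X=\theta$ and $\mathrm{Var}(X)=\sigma^2>0$. Let $N=2$. For $i\in\{1,2\}$ and $t\geq 1$ let $X_t^{(i)}$ be random variables distributed as $X$, mutually independent over both $i$ and $t$, and write $\mathbf X_t=(X_t^{(1)},X_t^{(2)})^\top$. For a $2\times2$ stochastic matrix $A$ define $\hat{\boldsymbol\theta}_1=\mathbf X_1$ and $\hat{\boldsymbol\theta}_{t+1}=\frac{t}{t+1}A\hat{\boldsymbol\theta}_t+\frac{1}{t+1}\mathbf X_{t+1}$ for $t\geq 1$. Let $\bar{\mathbb X}_{2t}=\frac{1}{2t}\sum_{i=1}^2\sum_{k=1}^t X_k^{(i)}$, $\mathbf 1=(1,1)^\top$, $\|\cdot\|$ the Euclidean norm, and $\tau_t(A)=\dfrac{\mathbb E\|(\bar{\mathbb X}_{2t}-\theta)\mathbf 1\|^2}{\mathbb E\|\hat{\boldsymbol\theta}_t-\theta\mathbf 1\|^2}$. *)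

theory Defs
  imports "HOL-Probability.Probability"
begin

text \<open>The recursive estimator: Xv t is the random vector X_t = (X_t^(1), X_t^(2)),
  indexed by t \<ge> 1 (the value at t = 0 is irrelevant).\<close>
fun theta_hat :: "real^2^2 \<Rightarrow> (nat \<Rightarrow> 'a \<Rightarrow> real^2) \<Rightarrow> nat \<Rightarrow> 'a \<Rightarrow> real^2" where
  "theta_hat A Xv 0 \<omega> = 0"
| "theta_hat A Xv (Suc 0) \<omega> = Xv 1 \<omega>"
| "theta_hat A Xv (Suc (Suc t)) \<omega> =
     (real (Suc t) / real (Suc (Suc t))) *\<^sub>R (A *v theta_hat A Xv (Suc t) \<omega>)
     + (1 / real (Suc (Suc t))) *\<^sub>R Xv (Suc (Suc t)) \<omega>"

definition pooled_mean :: "(nat \<Rightarrow> 'a \<Rightarrow> real^2) \<Rightarrow> nat \<Rightarrow> 'a \<Rightarrow> real" where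
  "pooled_mean Xv t \<omega> = (1 / (2 * real t)) * (\<Sum>i\<in>UNIV. \<Sum>k=1..t. Xv k \<omega> $ i)"

definition ones2 :: "real^2" where
  "ones2 = (\<chi> i. 1)"

definition tau :: "'a measure \<Rightarrow> real \<Rightarrow> real^2^2 \<Rightarrow> (nat \<Rightarrow> 'a \<Rightarrow> real^2) \<Rightarrow> nat \<Rightarrow> real" where
  "tau M \<theta> A Xv t =
     (\<integral>\<omega>. (norm ((pooled_mean Xv t \<omega> - \<theta>) *\<^sub>R ones2))\<^sup>2 \<partial>M) /
     (\<integral>\<omega>. (norm (theta_hat A Xv t \<omega> - \<theta> *\<^sub>R ones2))\<^sup>2 \<partial>M)"

definition H_mat :: "real \<Rightarrow> real^2^2" where
  "H_mat \<alpha> = (\<chi> i j. if j = 1 then 1 / \<alpha> else (\<alpha> - 1) / \<alpha>)"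

end

theory Submission
  imports Defs
begin


lemma (in prob_space) quad_form:
  fixes Z :: "'i \<Rightarrow> 'a \<Rightarrow> real"
  assumes fin: "finite I"
    and sq: "\<And>p. p\<in>I \<Longrightarrow> integrable M (\<lambda>\<omega>. (Z p \<omega>)\<^sup>2)"
    and sqv: "\<And>p. p\<in>I \<Longrightarrow> (\<integral>\<omega>. (Z p \<omega>)\<^sup>2 \<partial>M) = s"
    and cr: "\<And>p q. p\<in>I \<Longrightarrow> q\<in>I \<Longrightarrow> p\<noteq>q \<Longrightarrow> integrable M (\<lambda>\<omega>. Z p \<omega> * Z q \<omega>) \<and> (\<integral>\<omega>. Z p \<omega> * Z q \<omega> \<partial>M) = 0"
  shows "integrable M (\<lambda>\<omega>. (\<Sum>p\<in>I. a p * Z p \<omega>)\<^sup>2)"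
    and "(\<integral>\<omega>. (\<Sum>p\<in>I. a p * Z p \<omega>)\<^sup>2 \<partial>M) = s * (\<Sum>p\<in>I. (a p)\<^sup>2)"
proof -
  have eq: "(\<lambda>\<omega>. (\<Sum>p\<in>I. a p * Z p \<omega>)\<^sup>2) = (\<lambda>\<omega>. \<Sum>p\<in>I. \<Sum>q\<in>I. a p * a q * (Z p \<omega> * Z q \<omega>))"
    by (auto simp: power2_eq_square sum_product intro!: sum.cong ext)
  have ip: "integrable M (\<lambda>\<omega>. Z p \<omega> * Z q \<omega>)" if "p \<in> I" "q \<in> I" for p q
  proof (cases "p = q")
    case True then show ?thesis using sq[OF that(1)] by (simp add: power2_eq_square)
  next
    case False then show ?thesis using cr that by blast
  qed
  have iv: "(\<integral>\<omega>. Z p \<omega> * Z q \<omega> \<partial>M) = (if p = q then s else 0)" if "p \<in> I" "q \<in> I" for p q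
  proof (cases "p = q")
    case True then show ?thesis using sqv[OF that(1)] by (simp add: power2_eq_square)
  next
    case False then show ?thesis using cr that by simp
  qed
  show "integrable M (\<lambda>\<omega>. (\<Sum>p\<in>I. a p * Z p \<omega>)\<^sup>2)"
    unfolding eq by (auto intro!: integrable_sum integrable_mult_right ip)
  have "(\<integral>\<omega>. (\<Sum>p\<in>I. a p * Z p \<omega>)\<^sup>2 \<partial>M) = (\<Sum>p\<in>I. \<Sum>q\<in>I. a p * a q * (\<integral>\<omega>. Z p \<omega> * Z q \<omega> \<partial>M))"
    unfolding eq
    by (simp add: integral_sum ip integrable_sum integrable_mult_right)
  also have "\<dots> = (\<Sum>p\<in>I. \<Sum>q\<in>I. a p * a q * (if p = q then s else 0))"
    using iv by (intro sum.cong refl) auto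
  also have "\<dots> = (\<Sum>p\<in>I. s * (a p)\<^sup>2)"
    using fin by (intro sum.cong refl) (simp add: if_distrib power2_eq_square sum.delta cong: if_cong)
  finally show "(\<integral>\<omega>. (\<Sum>p\<in>I. a p * Z p \<omega>)\<^sup>2 \<partial>M) = s * (\<Sum>p\<in>I. (a p)\<^sup>2)"
    by (simp add: sum_distrib_left)
qed

lemma (in prob_space) moments:
  fixes X :: "'a \<Rightarrow> real" and Xv :: "nat \<Rightarrow> 'a \<Rightarrow> real^2"
  assumes Xm: "X \<in> borel_measurable M" and X2: "integrable M (\<lambda>\<omega>. (X \<omega>)\<^sup>2)"
   and ind: "indep_vars (\<lambda>_. borel) (\<lambda>(t, i) \<omega>. Xv t \<omega> $ i) ({1..} \<times> UNIV)"
   and dist: "\<And>t i. t \<ge> 1 \<Longrightarrow> distr M borel (\<lambda>\<omega>. Xv t \<omega> $ i) = distr M borel X"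
  shows "\<And>p. p \<in> {1..} \<times> UNIV \<Longrightarrow> integrable M (\<lambda>\<omega>. (Xv (fst p) \<omega> $ snd p - expectation X)\<^sup>2)
             \<and> (\<integral>\<omega>. (Xv (fst p) \<omega> $ snd p - expectation X)\<^sup>2 \<partial>M) = variance X"
    and "\<And>p q. p \<in> {1..} \<times> UNIV \<Longrightarrow> q \<in> {1..} \<times> UNIV \<Longrightarrow> p \<noteq> q \<Longrightarrow>
          integrable M (\<lambda>\<omega>. (Xv (fst p) \<omega> $ snd p - expectation X) * (Xv (fst q) \<omega> $ snd q - expectation X))
        \<and> (\<integral>\<omega>. (Xv (fst p) \<omega> $ snd p - expectation X) * (Xv (fst q) \<omega> $ snd q - expectation X) \<partial>M) = 0"
proof -
  define \<theta> where "\<theta> = expectation X"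
  define Z where "Z = (\<lambda>p \<omega>. Xv (fst p) \<omega> $ snd p - \<theta>)"
  have X1: "integrable M X"
    using square_integrable_imp_integrable[OF Xm X2] .
  have meas: "(\<lambda>\<omega>. Xv (fst p) \<omega> $ snd p) \<in> borel_measurable M" if "p \<in> {1..} \<times> UNIV" for p
    using ind that unfolding indep_vars_def by (cases p) auto
  have tr_int: "integrable M (\<lambda>\<omega>. f (Xv (fst p) \<omega> $ snd p)) \<longleftrightarrow> integrable M (\<lambda>\<omega>. f (X \<omega>))"
    if "p \<in> {1..} \<times> UNIV" "f \<in> borel_measurable borel" for p and f :: "real \<Rightarrow> real"
  proof -
    have "integrable M (\<lambda>\<omega>. f (Xv (fst p) \<omega> $ snd p)) \<longleftrightarrow> integrable (distr M borel (\<lambda>\<omega>. Xv (fst p) \<omega> $ snd p)) f"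
      using meas[OF that(1)] that(2) by (simp add: integrable_distr_eq)
    also have "\<dots> \<longleftrightarrow> integrable (distr M borel X) f" using dist[of "fst p" "snd p"] that by auto
    also have "\<dots> \<longleftrightarrow> integrable M (\<lambda>\<omega>. f (X \<omega>))" using Xm that(2) by (simp add: integrable_distr_eq)
    finally show ?thesis .
  qed
  have tr_eq: "(\<integral>\<omega>. f (Xv (fst p) \<omega> $ snd p) \<partial>M) = (\<integral>\<omega>. f (X \<omega>) \<partial>M)"
    if "p \<in> {1..} \<times> UNIV" "f \<in> borel_measurable borel" for p and f :: "real \<Rightarrow> real"
  proof -
    have "(\<integral>\<omega>. f (Xv (fst p) \<omega> $ snd p) \<partial>M) = integral\<^sup>L (distr M borel (\<lambda>\<omega>. Xv (fst p) \<omega> $ snd p)) f"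
      using meas[OF that(1)] that(2) by (simp add: integral_distr)
    also have "\<dots> = integral\<^sup>L (distr M borel X) f" using dist[of "fst p" "snd p"] that by auto
    also have "\<dots> = (\<integral>\<omega>. f (X \<omega>) \<partial>M)" using Xm that(2) by (simp add: integral_distr)
    finally show ?thesis .
  qed
  have Zint: "integrable M (Z p)" and Zexp: "integral\<^sup>L M (Z p) = 0" if "p \<in> {1..} \<times> UNIV" for p
  proof -
    have "integrable M (\<lambda>\<omega>. (\<lambda>x. x - \<theta>) (Xv (fst p) \<omega> $ snd p))"
      using tr_int[OF that, of "\<lambda>x. x - \<theta>"] X1 by simp
    then show "integrable M (Z p)" by (simp add: Z_def)
    have "integral\<^sup>L M (Z p) = (\<integral>\<omega>. (\<lambda>x. x - \<theta>) (X \<omega>) \<partial>M)"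
      unfolding Z_def using tr_eq[OF that, of "\<lambda>x. x - \<theta>"] by simp
    also have "\<dots> = 0" using X1 by (simp add: \<theta>_def prob_space)
    finally show "integral\<^sup>L M (Z p) = 0" .
  qed
  show "integrable M (\<lambda>\<omega>. (Xv (fst p) \<omega> $ snd p - expectation X)\<^sup>2)
             \<and> (\<integral>\<omega>. (Xv (fst p) \<omega> $ snd p - expectation X)\<^sup>2 \<partial>M) = variance X"
    if p: "p \<in> {1..} \<times> UNIV" for p
  proof
    have "integrable M (\<lambda>\<omega>. (X \<omega> - \<theta>)\<^sup>2)"
      using X1 X2 by (simp add: power2_diff)
    then show "integrable M (\<lambda>\<omega>. (Xv (fst p) \<omega> $ snd p - expectation X)\<^sup>2)"
      using tr_int[OF p, of "\<lambda>x. (x - \<theta>)\<^sup>2"] by (simp add: \<theta>_def)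
    show "(\<integral>\<omega>. (Xv (fst p) \<omega> $ snd p - expectation X)\<^sup>2 \<partial>M) = variance X"
      using tr_eq[OF p, of "\<lambda>x. (x - \<theta>)\<^sup>2"] by (simp add: \<theta>_def)
  qed
  show "integrable M (\<lambda>\<omega>. (Xv (fst p) \<omega> $ snd p - expectation X) * (Xv (fst q) \<omega> $ snd q - expectation X))
        \<and> (\<integral>\<omega>. (Xv (fst p) \<omega> $ snd p - expectation X) * (Xv (fst q) \<omega> $ snd q - expectation X) \<partial>M) = 0"
    if p: "p \<in> {1..} \<times> UNIV" and q: "q \<in> {1..} \<times> UNIV" and pq: "p \<noteq> q" for p q
  proof -
    have indZ0: "indep_vars (\<lambda>_. borel) (\<lambda>p \<omega>. (\<lambda>x. x - \<theta>) ((\<lambda>(t, i) \<omega>. Xv t \<omega> $ i) p \<omega>)) ({1..} \<times> UNIV)"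
      by (rule indep_vars_compose2[OF ind]) auto
    have indZ: "indep_vars (\<lambda>_. borel) Z {p, q}"
      using indep_vars_subset[OF indZ0, of "{p,q}"] p q
      by (simp add: Z_def case_prod_beta)
    have "integrable M (\<lambda>\<omega>. \<Prod>r\<in>{p,q}. Z r \<omega>)"
      using indZ p q Zint by (intro indep_vars_integrable) auto
    moreover have "(\<integral>\<omega>. (\<Prod>r\<in>{p,q}. Z r \<omega>) \<partial>M) = (\<Prod>r\<in>{p,q}. integral\<^sup>L M (Z r))"
      using indZ p q Zint by (intro indep_vars_lebesgue_integral) auto
    ultimately show ?thesis using pq Zexp[OF p] by (simp add: Z_def \<theta>_def)
  qed
qed



definition piw :: "real \<Rightarrow> 2 \<Rightarrow> real" where
  "piw \<alpha> i = (if i = 1 then 1 / \<alpha> else (\<alpha> - 1) / \<alpha>)"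

lemma H_mult: "(H_mat \<alpha> *v v) $ j = (\<Sum>i\<in>UNIV. piw \<alpha> i * v $ i)"
  by (simp add: H_mat_def matrix_vector_mult_def piw_def)

lemma piw_sum: "\<alpha> \<noteq> 0 \<Longrightarrow> (\<Sum>i\<in>UNIV. piw \<alpha> i) = 1"
  by (simp add: sum_2 piw_def field_simps)

lemma aux_div: "(x::real) > 0 \<Longrightarrow> x / (1 + x) * (1 / x * Q) = Q / (1 + x)"
  by (simp add: field_simps)

lemma theta_formula:
  assumes "\<alpha> \<noteq> 0" "t \<ge> 1"
  shows "theta_hat (H_mat \<alpha>) Xv t \<omega> $ j =
     (1 / real t) * (Xv t \<omega> $ j + (\<Sum>k\<in>{1..<t}. \<Sum>i\<in>UNIV. piw \<alpha> i * Xv k \<omega> $ i))"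
  using assms(2)
proof (induction t arbitrary: j rule: nat_induct_at_least)
  case base
  then show ?case by simp
next
  case (Suc t)
  define S where "S = (\<Sum>k\<in>{1..<t}. \<Sum>i\<in>UNIV. piw \<alpha> i * Xv k \<omega> $ i)"
  obtain u where u: "t = Suc u" using Suc(1) by (cases t) auto
  have "theta_hat (H_mat \<alpha>) Xv (Suc t) \<omega> $ j =
     (real t / real (Suc t)) * (\<Sum>i\<in>UNIV. piw \<alpha> i * theta_hat (H_mat \<alpha>) Xv t \<omega> $ i)
     + (1 / real (Suc t)) * Xv (Suc t) \<omega> $ j"
    using u by (simp add: H_mult)
  also have "(\<Sum>i\<in>UNIV. piw \<alpha> i * theta_hat (H_mat \<alpha>) Xv t \<omega> $ i)
      = (1 / real t) * ((\<Sum>i\<in>UNIV. piw \<alpha> i * Xv t \<omega> $ i) + (\<Sum>i\<in>UNIV. piw \<alpha> i) * S)"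
    unfolding Suc(2) S_def by (simp add: sum_2 algebra_simps)
  also have "(\<Sum>i\<in>UNIV. piw \<alpha> i) = 1" using assms(1) by (rule piw_sum)
  also have "(\<Sum>k\<in>{1..<Suc t}. \<Sum>i\<in>UNIV. piw \<alpha> i * Xv k \<omega> $ i) = S + (\<Sum>i\<in>UNIV. piw \<alpha> i * Xv t \<omega> $ i)"
    using Suc(1) by (simp add: S_def)
  moreover have "real t > 0" using Suc(1) by simp
  then have "real t / real (Suc t) * (1 / real t * (P + 1 * S)) = (S + P) / real (Suc t)" for P
    using aux_div[of "real t" "P + 1 * S"] by (simp add: of_nat_Suc add.commute)
  ultimately show ?case by (simp add: divide_simps)
qed



definition acoef :: "real \<Rightarrow> nat \<Rightarrow> 2 \<Rightarrow> nat \<times> 2 \<Rightarrow> real" where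
  "acoef \<alpha> t j p = (if fst p = t then (if snd p = j then 1 / real t else 0) else piw \<alpha> (snd p) / real t)"

lemma sum_J: "(\<Sum>p\<in>{1..t} \<times> UNIV. f p) = (\<Sum>k\<in>{1..t}. \<Sum>i\<in>UNIV. f (k, i))"
  by (simp add: sum.cartesian_product)

lemma theta_dev:
  assumes "\<alpha> \<noteq> 0" "t \<ge> 1"
  shows "theta_hat (H_mat \<alpha>) Xv t \<omega> $ j - \<theta> =
     (\<Sum>p\<in>{1..t} \<times> UNIV. acoef \<alpha> t j p * (Xv (fst p) \<omega> $ snd p - \<theta>))"
proof -
  have split: "{1..t} = insert t {1..<t}" using assms(2) by auto
  have A: "(\<Sum>i\<in>UNIV. acoef \<alpha> t j (t, i) * (Xv t \<omega> $ i - \<theta>)) = (Xv t \<omega> $ j - \<theta>) / real t"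
    using exhaust_2[of j] by (auto simp: acoef_def sum_2)
  have B: "(\<Sum>i\<in>UNIV. acoef \<alpha> t j (k, i) * (Xv k \<omega> $ i - \<theta>)) =
      (1 / real t) * (\<Sum>i\<in>UNIV. piw \<alpha> i * Xv k \<omega> $ i) - \<theta> / real t" if "k < t" for k
  proof -
    have "(\<Sum>i\<in>UNIV. acoef \<alpha> t j (k, i) * (Xv k \<omega> $ i - \<theta>)) =
       (1 / real t) * (\<Sum>i\<in>UNIV. piw \<alpha> i * Xv k \<omega> $ i) - (\<Sum>i\<in>UNIV. piw \<alpha> i) * \<theta> / real t"
      using that by (simp add: acoef_def sum_2 algebra_simps add_divide_distrib diff_divide_distrib)
    then show ?thesis using piw_sum[OF assms(1)] by simp
  qed
  have "(\<Sum>p\<in>{1..t} \<times> UNIV. acoef \<alpha> t j p * (Xv (fst p) \<omega> $ snd p - \<theta>))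
     = (Xv t \<omega> $ j - \<theta>) / real t + (\<Sum>k\<in>{1..<t}. (1 / real t) * (\<Sum>i\<in>UNIV. piw \<alpha> i * Xv k \<omega> $ i) - \<theta> / real t)"
  proof -
    have "(\<Sum>k\<in>{1..<t}. \<Sum>i\<in>UNIV. acoef \<alpha> t j (k, i) * (Xv k \<omega> $ i - \<theta>)) =
       (\<Sum>k\<in>{1..<t}. (1 / real t) * (\<Sum>i\<in>UNIV. piw \<alpha> i * Xv k \<omega> $ i) - \<theta> / real t)"
      by (rule sum.cong) (auto simp: B)
    then show ?thesis unfolding sum_J unfolding split using A by simp
  qed
  also have "\<dots> = (Xv t \<omega> $ j - \<theta>) / real t + (1 / real t) * (\<Sum>k\<in>{1..<t}. \<Sum>i\<in>UNIV. piw \<alpha> i * Xv k \<omega> $ i)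
        - real (t - 1) * \<theta> / real t"
    by (simp add: sum_subtractf sum_distrib_left)
  also have "\<dots> = theta_hat (H_mat \<alpha>) Xv t \<omega> $ j - \<theta>"
    unfolding theta_formula[OF assms] using assms(2) by (simp add: field_simps of_nat_diff)
  finally show ?thesis by simp
qed

lemma acoef_sq:
  assumes "t \<ge> 1"
  shows "(\<Sum>p\<in>{1..t} \<times> UNIV. (acoef \<alpha> t j p)\<^sup>2) = (1 + real (t - 1) * (\<Sum>i\<in>UNIV. (piw \<alpha> i)\<^sup>2)) / (real t)\<^sup>2"
proof -
  have split: "{1..t} = insert t {1..<t}" using assms by auto
  have A: "(\<Sum>i\<in>UNIV. (acoef \<alpha> t j (t, i))\<^sup>2) = 1 / (real t)\<^sup>2"
    using exhaust_2[of j] by (auto simp: acoef_def sum_2 power_divide)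
  have B: "(\<Sum>i\<in>UNIV. (acoef \<alpha> t j (k, i))\<^sup>2) = (\<Sum>i\<in>UNIV. (piw \<alpha> i)\<^sup>2) / (real t)\<^sup>2" if "k < t" for k
    using that by (simp add: acoef_def power_divide sum_divide_distrib)
  show ?thesis
  proof -
    have "(\<Sum>k\<in>{1..<t}. \<Sum>i\<in>UNIV. (acoef \<alpha> t j (k, i))\<^sup>2) =
       (\<Sum>k\<in>{1..<t}. (\<Sum>i\<in>UNIV. (piw \<alpha> i)\<^sup>2) / (real t)\<^sup>2)"
      by (rule sum.cong) (auto intro: B)
    then show ?thesis unfolding sum_J unfolding split using A by (simp add: add_divide_distrib)
  qed
qed

lemma pooled_dev:
  assumes "t \<ge> 1"
  shows "pooled_mean Xv t \<omega> - \<theta> = (\<Sum>p\<in>{1..t} \<times> UNIV. (1 / (2 * real t)) * (Xv (fst p) \<omega> $ snd p - \<theta>))"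
proof -
  have "(\<Sum>p\<in>{1..t} \<times> UNIV. (1 / (2 * real t)) * (Xv (fst p) \<omega> $ snd p - \<theta>))
     = (1 / (2 * real t)) * (\<Sum>k\<in>{1..t}. \<Sum>i\<in>UNIV. Xv k \<omega> $ i) - (1 / (2 * real t)) * (2 * real t) * \<theta>"
    unfolding sum_J using assms
    by (simp add: sum_2 sum.distrib sum_subtractf right_diff_distrib sum_distrib_left sum_divide_distrib add_divide_distrib)
  also have "\<dots> = pooled_mean Xv t \<omega> - \<theta>"
    using assms sum.swap[where g="\<lambda>k i. Xv k \<omega> $ i" and A="{1..t}" and B=UNIV] by (simp add: pooled_mean_def)
  finally show ?thesis by simp
qed

lemma norm_sq_vec2: "(norm (v :: real^2))\<^sup>2 = (\<Sum>j\<in>UNIV. (v $ j)\<^sup>2)"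
  by (simp add: norm_vec_def L2_set_def sum_nonneg)

lemma norm_ones: "(norm (c *\<^sub>R ones2))\<^sup>2 = 2 * c\<^sup>2"
  unfolding norm_sq_vec2 by (simp add: ones2_def sum_2)



lemma limit_part:
  assumes "c > 0"
  shows "(\<lambda>t. real t / (2 * (1 + real (t - 1) * c))) \<longlonglongrightarrow> 1 / (2 * c)"
proof -
  have "(\<lambda>t::nat. 1 / (2 * (1 / real t + (1 - 1 / real t) * c))) \<longlonglongrightarrow> 1 / (2 * (0 + (1 - 0) * c))"
    using assms by (intro tendsto_intros lim_1_over_n) auto
  then have L: "(\<lambda>t::nat. 1 / (2 * (1 / real t + (1 - 1 / real t) * c))) \<longlonglongrightarrow> 1 / (2 * c)" by simp
  show ?thesis
  proof (rule Lim_transform_eventually[OF L])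
    show "\<forall>\<^sub>F t in sequentially. 1 / (2 * (1 / real t + (1 - 1 / real t) * c)) = real t / (2 * (1 + real (t - 1) * c))"
      using eventually_ge_at_top[of "1::nat"]
    proof eventually_elim
      case (elim t)
      then have "real t > 0" by simp
      then show ?case using elim by (simp add: field_simps of_nat_diff)
    qed
  qed
qed

lemma aux_tau: "(D::real) > 0 \<Longrightarrow> (t::real) > 0 \<Longrightarrow> s > 0 \<Longrightarrow> (s / t) / (2 * s * D / t\<^sup>2) = t / (2 * D)"
  by (simp add: field_simps power2_eq_square)

theorem mainTheorem7:
  fixes M :: "'a measure" and X :: "'a \<Rightarrow> real" and Xv :: "nat \<Rightarrow> 'a \<Rightarrow> real^2"
    and \<alpha> :: real
  assumes "prob_space M"
    and "X \<in> borel_measurable M"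
    and "integrable M (\<lambda>\<omega>. (X \<omega>)\<^sup>2)"
    and "prob_space.variance M X > 0"
    and "prob_space.indep_vars M (\<lambda>_. borel) (\<lambda>(t, i) \<omega>. Xv t \<omega> $ i) ({1..} \<times> UNIV)"
    and "\<And>t i. t \<ge> 1 \<Longrightarrow> distr M borel (\<lambda>\<omega>. Xv t \<omega> $ i) = distr M borel X"
    and "\<alpha> > 1"
  shows "(\<lambda>t. tau M (prob_space.expectation M X) (H_mat \<alpha>) Xv t)
           \<longlonglongrightarrow> \<alpha>\<^sup>2 / (2 + 2 * (\<alpha> - 1)\<^sup>2)"
proof -
  interpret prob_space M by fact
  define \<theta> where "\<theta> = expectation X"
  define s where "s = variance X"
  define c where "c = (\<Sum>i\<in>UNIV. (piw \<alpha> i)\<^sup>2)"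
  define Z where "Z = (\<lambda>p \<omega>. Xv (fst p) \<omega> $ snd p - \<theta>)"
  have spos: "s > 0" using assms(4) by (simp add: s_def)
  have a0: "\<alpha> \<noteq> 0" using assms(7) by simp
  have c_eq: "c = (1 + (\<alpha> - 1)\<^sup>2) / \<alpha>\<^sup>2"
    by (simp add: c_def sum_2 piw_def power_divide add_divide_distrib)
  have cpos: "c > 0" unfolding c_eq using a0 by (simp add: add_pos_nonneg)
  have Zsq: "integrable M (\<lambda>\<omega>. (Z p \<omega>)\<^sup>2)" "(\<integral>\<omega>. (Z p \<omega>)\<^sup>2 \<partial>M) = s"
    if "p \<in> {1..} \<times> UNIV" for p
    using moments(1)[of X Xv p, OF assms(2,3,5) assms(6) that] by (simp_all add: Z_def s_def \<theta>_def)
  have Zcr: "integrable M (\<lambda>\<omega>. Z p \<omega> * Z q \<omega>) \<and> (\<integral>\<omega>. Z p \<omega> * Z q \<omega> \<partial>M) = 0"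
    if "p \<in> {1..} \<times> UNIV" "q \<in> {1..} \<times> UNIV" "p \<noteq> q" for p q
    using moments(2)[of X Xv p q, OF assms(2,3,5) assms(6) that] by (simp add: Z_def \<theta>_def)
  have sub: "{1..t} \<times> (UNIV::2 set) \<subseteq> {1..} \<times> UNIV" for t :: nat by auto
  have QI: "integrable M (\<lambda>\<omega>. (\<Sum>p\<in>{1..t} \<times> UNIV. a p * Z p \<omega>)\<^sup>2)"
    and QE: "(\<integral>\<omega>. (\<Sum>p\<in>{1..t} \<times> UNIV. a p * Z p \<omega>)\<^sup>2 \<partial>M) = s * (\<Sum>p\<in>{1..t} \<times> UNIV. (a p)\<^sup>2)"
    for t :: nat and a
  proof -
    have f: "finite ({1..t} \<times> (UNIV::2 set))" by simp
    have h1: "\<And>p. p \<in> {1..t} \<times> UNIV \<Longrightarrow> integrable M (\<lambda>\<omega>. (Z p \<omega>)\<^sup>2)"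
      using Zsq(1) sub[of t] by blast
    have h2: "\<And>p. p \<in> {1..t} \<times> UNIV \<Longrightarrow> (\<integral>\<omega>. (Z p \<omega>)\<^sup>2 \<partial>M) = s"
      using Zsq(2) sub[of t] by blast
    have h3: "\<And>p q. p \<in> {1..t} \<times> UNIV \<Longrightarrow> q \<in> {1..t} \<times> UNIV \<Longrightarrow> p \<noteq> q \<Longrightarrow>
       integrable M (\<lambda>\<omega>. Z p \<omega> * Z q \<omega>) \<and> (\<integral>\<omega>. Z p \<omega> * Z q \<omega> \<partial>M) = 0"
      using Zcr sub[of t] by (meson subsetD)
    show "integrable M (\<lambda>\<omega>. (\<Sum>p\<in>{1..t} \<times> UNIV. a p * Z p \<omega>)\<^sup>2)"
      by (rule quad_form(1)[OF f h1 h2 h3])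
    show "(\<integral>\<omega>. (\<Sum>p\<in>{1..t} \<times> UNIV. a p * Z p \<omega>)\<^sup>2 \<partial>M) = s * (\<Sum>p\<in>{1..t} \<times> UNIV. (a p)\<^sup>2)"
      by (rule quad_form(2)[OF f h1 h2 h3])
  qed
  have tau_eq: "tau M \<theta> (H_mat \<alpha>) Xv t = real t / (2 * (1 + real (t - 1) * c))" if t: "t \<ge> 1" for t
  proof -
    have tpos: "real t > 0" using t by simp
    have cardJ: "card ({1..t} \<times> (UNIV::2 set)) = 2 * t" by (simp add: card_cartesian_product)
    have num: "(\<integral>\<omega>. (norm ((pooled_mean Xv t \<omega> - \<theta>) *\<^sub>R ones2))\<^sup>2 \<partial>M) = s / real t"
    proof -
      have "(\<integral>\<omega>. (norm ((pooled_mean Xv t \<omega> - \<theta>) *\<^sub>R ones2))\<^sup>2 \<partial>M)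
          = (\<integral>\<omega>. 2 * (\<Sum>p\<in>{1..t} \<times> UNIV. (1 / (2 * real t)) * Z p \<omega>)\<^sup>2 \<partial>M)"
        unfolding norm_ones pooled_dev[OF t] Z_def ..
      also have "\<dots> = 2 * (s * (\<Sum>p\<in>{1..t} \<times> (UNIV::2 set). (1 / (2 * real t))\<^sup>2))"
        using QE[of "\<lambda>_. 1 / (2 * real t)" t] by simp
      also have "\<dots> = s / real t"
        using cardJ tpos by (simp add: power2_eq_square field_simps)
      finally show ?thesis .
    qed
    have den: "(\<integral>\<omega>. (norm (theta_hat (H_mat \<alpha>) Xv t \<omega> - \<theta> *\<^sub>R ones2))\<^sup>2 \<partial>M)
        = 2 * s * (1 + real (t - 1) * c) / (real t)\<^sup>2"
    proof -
      have "(\<integral>\<omega>. (norm (theta_hat (H_mat \<alpha>) Xv t \<omega> - \<theta> *\<^sub>R ones2))\<^sup>2 \<partial>M)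
         = (\<integral>\<omega>. (\<Sum>j\<in>UNIV. (\<Sum>p\<in>{1..t} \<times> UNIV. acoef \<alpha> t j p * Z p \<omega>)\<^sup>2) \<partial>M)"
        unfolding norm_sq_vec2 by (simp add: ones2_def theta_dev[OF a0 t] Z_def)
      also have "\<dots> = (\<Sum>j\<in>UNIV. (\<integral>\<omega>. (\<Sum>p\<in>{1..t} \<times> UNIV. acoef \<alpha> t j p * Z p \<omega>)\<^sup>2 \<partial>M))"
        using QI by (simp add: integral_sum)
      also have "\<dots> = (\<Sum>j\<in>(UNIV::2 set). s * ((1 + real (t - 1) * c) / (real t)\<^sup>2))"
        using QE acoef_sq[OF t] by (simp add: c_def)
      also have "\<dots> = 2 * s * (1 + real (t - 1) * c) / (real t)\<^sup>2"
        by (simp add: sum_2)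
      finally show ?thesis .
    qed
    have "1 + real (t - 1) * c > 0" using cpos by (simp add: add_pos_nonneg)
    then show ?thesis
      unfolding tau_def num den using tpos spos aux_tau by blast
  qed
  have "(\<lambda>t. tau M \<theta> (H_mat \<alpha>) Xv t) \<longlonglongrightarrow> 1 / (2 * c)"
  proof (rule Lim_transform_eventually[OF limit_part[OF cpos]])
    show "\<forall>\<^sub>F t in sequentially. real t / (2 * (1 + real (t - 1) * c)) = tau M \<theta> (H_mat \<alpha>) Xv t"
      using eventually_ge_at_top[of "1::nat"] by eventually_elim (simp add: tau_eq)
  qed
  moreover have "1 / (2 * c) = \<alpha>\<^sup>2 / (2 + 2 * (\<alpha> - 1)\<^sup>2)"
    unfolding c_eq using a0 by (simp add: field_simps)
  ultimately show ?thesis by (simp add: \<theta>_def)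
qed


end
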